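(* Let $n\ge2$, let $\alpha=(\alpha_1,\dots,\alpha_n)^T\in\mathbb{R}^n$ with $\alpha_1>\alpha_2>\cdots>\alpha_n$, and let $A=(a_{ij})$ be a real $n\times n$ matrix such that $AP\alpha\sim A\alpha$ for every $P\in\mathbf{P}_n$. Then all column sums of $A$ are equal: $\sum_{l=1}^n a_{ls}=\sum_{l=1}^n a_{lt}$ for all $1\le s,t\le n$.
   Context: For $x,y\in\mathbb{R}^n$, $x\prec y$ means $x=Dy$ for some $n\times n$ doubly stochastic matrix $D$; $x\sim y$ means $x\prec y$ and $y\prec x$. $\mathbf{P}_n$ is the set of $n\times n$ permutation matrices. *)

theory Defs
  imports "HOL-Analysis.Analysis" "HOL-Combinatorics.Permutations"
begin

definition doubly_stochastic :: "real^'n^'n \<Rightarrow> bool" where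
  "doubly_stochastic D \<longleftrightarrow>
     (\<forall>i j. D $ i $ j \<ge> 0) \<and>
     (\<forall>i. (\<Sum>j\<in>UNIV. D $ i $ j) = 1) \<and>
     (\<forall>j. (\<Sum>i\<in>UNIV. D $ i $ j) = 1)"

definition majorized_by :: "real^'n \<Rightarrow> real^'n \<Rightarrow> bool" (infix "\<prec>\<^sub>m" 50) where
  "x \<prec>\<^sub>m y \<longleftrightarrow> (\<exists>D. doubly_stochastic D \<and> x = D *v y)"

definition maj_equiv :: "real^'n \<Rightarrow> real^'n \<Rightarrow> bool" (infix "\<sim>\<^sub>m" 50) where
  "x \<sim>\<^sub>m y \<longleftrightarrow> x \<prec>\<^sub>m y \<and> y \<prec>\<^sub>m x"

definition perm_matrix :: "('n \<Rightarrow> 'n) \<Rightarrow> real^'n^'n" where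
  "perm_matrix p = (\<chi> i j. if i = p j then 1 else 0)"

definition perm_matrices :: "(real^'n^'n) set" where
  "perm_matrices = {perm_matrix p | p. p permutes (UNIV :: 'n set)}"

end

theory Submission
  imports Defs
begin

lemma ds_sum:
  fixes D :: "real^'n^'n" and y :: "real^'n"
  assumes "doubly_stochastic D"
  shows "(\<Sum>i\<in>UNIV. (D *v y) $ i) = (\<Sum>j\<in>UNIV. y $ j)"
proof -
  have "(\<Sum>i\<in>UNIV. (D *v y) $ i) = (\<Sum>i\<in>UNIV. \<Sum>j\<in>UNIV. D$i$j * y$j)"
    by (simp add: matrix_vector_mult_def)
  also have "\<dots> = (\<Sum>j\<in>UNIV. \<Sum>i\<in>UNIV. D$i$j * y$j)" by (rule sum.swap)
  also have "\<dots> = (\<Sum>j\<in>UNIV. (\<Sum>i\<in>UNIV. D$i$j) * y$j)" by (simp add: sum_distrib_right)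
  also have "\<dots> = (\<Sum>j\<in>UNIV. y$j)" using assms by (simp add: doubly_stochastic_def)
  finally show ?thesis .
qed

lemma perm_sum:
  fixes A :: "real^'n^'n" and \<alpha> :: "real^'n"
  shows "(\<Sum>l\<in>UNIV. ((A ** perm_matrix p) *v \<alpha>) $ l)
       = (\<Sum>j\<in>UNIV. (\<Sum>l\<in>UNIV. A$l$(p j)) * \<alpha>$j)"
proof -
  have e: "(A ** perm_matrix p) $ l $ j = A$l$(p j)" for l j
  proof -
    have "(A ** perm_matrix p) $ l $ j = (\<Sum>k\<in>UNIV. A$l$k * (if k = p j then 1 else 0))"
      by (simp add: matrix_matrix_mult_def perm_matrix_def)
    also have "\<dots> = A$l$(p j)" by (simp add: if_distrib cong: if_cong)
    finally show ?thesis .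
  qed
  have "(\<Sum>l\<in>UNIV. ((A ** perm_matrix p) *v \<alpha>) $ l) = (\<Sum>l\<in>UNIV. \<Sum>j\<in>UNIV. A$l$(p j) * \<alpha>$j)"
    by (simp add: matrix_vector_mult_def e)
  also have "\<dots> = (\<Sum>j\<in>UNIV. \<Sum>l\<in>UNIV. A$l$(p j) * \<alpha>$j)" by (rule sum.swap)
  also have "\<dots> = (\<Sum>j\<in>UNIV. (\<Sum>l\<in>UNIV. A$l$(p j)) * \<alpha>$j)" by (simp add: sum_distrib_right)
  finally show ?thesis .
qed

theorem mainTheorem4:
  fixes \<alpha> :: "(real, 'n::{finite,linorder}) vec" and A :: "((real, 'n) vec, 'n) vec"
  assumes "CARD('n) \<ge> 2"
    and "\<forall>i j. i < j \<longrightarrow> \<alpha> $ i > \<alpha> $ j"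
    and "\<forall>P\<in>perm_matrices. (A ** P) *v \<alpha> \<sim>\<^sub>m A *v \<alpha>"
  shows "\<forall>s t. (\<Sum>l\<in>UNIV. A $ l $ s) = (\<Sum>l\<in>UNIV. A $ l $ t)"
proof (intro allI)
  fix s t :: 'n
  define c where "c k = (\<Sum>l\<in>UNIV. A $ l $ k)" for k
  have key: "(\<Sum>j\<in>UNIV. c (p j) * \<alpha>$j) = (\<Sum>j\<in>UNIV. c j * \<alpha>$j)" if p: "p permutes UNIV" for p
  proof -
    have "perm_matrix p \<in> perm_matrices" using p unfolding perm_matrices_def by blast
    with assms(3) have "(A ** perm_matrix p) *v \<alpha> \<prec>\<^sub>m A *v \<alpha>"
      by (simp add: maj_equiv_def)
    then obtain D where D: "doubly_stochastic D" "(A ** perm_matrix p) *v \<alpha> = D *v (A *v \<alpha>)"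
      by (auto simp: majorized_by_def)
    have "(\<Sum>l\<in>UNIV. ((A ** perm_matrix p) *v \<alpha>) $ l) = (\<Sum>l\<in>UNIV. (A *v \<alpha>) $ l)"
      using D ds_sum by metis
    moreover have "(\<Sum>l\<in>UNIV. (A *v \<alpha>) $ l) = (\<Sum>l\<in>UNIV. ((A ** perm_matrix id) *v \<alpha>) $ l)"
    proof -
      have "A ** perm_matrix id = A"
        by (simp add: perm_matrix_def mat_def[symmetric] matrix_mul_rid)
      then show ?thesis by simp
    qed
    ultimately show ?thesis by (simp add: perm_sum c_def)
  qed
  show "c s = c t" unfolding c_def[symmetric]
  proof (cases "s = t")
    case True then show ?thesis by simp
  next
    case False
    let ?f = "\<lambda>j. (c (Transposition.transpose s t j) - c j) * \<alpha>$j"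
    have "(\<Sum>j\<in>UNIV. ?f j) = 0"
      using key[OF permutes_swap_id[of s UNIV t]] by (simp add: left_diff_distrib sum_subtractf)
    moreover have "(\<Sum>j\<in>UNIV. ?f j) = (\<Sum>j\<in>{s,t}. ?f j)"
      by (rule sum.mono_neutral_right) auto
    ultimately have "(c t - c s) * \<alpha>$s + (c s - c t) * \<alpha>$t = 0" using False by simp
    hence "(c t - c s) * (\<alpha>$s - \<alpha>$t) = 0" by (simp add: algebra_simps)
    moreover have "\<alpha>$s \<noteq> \<alpha>$t" using assms(2) False
      by (metis less_irrefl neq_iff)
    ultimately show ?thesis by simp
  qed
qed

end
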